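(* For every countably infinite subset $C\subseteq(0,\infty)$ there exists a countable directed graph $E$ such that $$\{\beta_v : v\in\textstyle\bigcup_{\beta>0}E^0_{\beta\text{-reg}}\}=C.$$
   Context: For a countable directed graph $E$ and $v\in E^0$, $E^nv$ is the set of paths of length $n$ ending at $v$, $Z_v(\beta)=\sum_{n\ge0}|E^nv|e^{-\beta n}\in[0,\infty]$, $E^0_{\beta\text{-reg}}=\{v\in E^0:Z_v(\beta)<\infty\}$, and $\beta_v=\inf\{\beta\in\mathbb R:Z_v(\beta)<\infty\}$ (the critical inverse temperature of $v$). *)

theory Defs
  imports "HOL-Analysis.Analysis" "HOL-Library.Extended_Nonnegative_Real" "HOL-Library.Extended_Real"
begin

definition cdigraph :: "'v set \<Rightarrow> 'e set \<Rightarrow> ('e \<Rightarrow> 'v) \<Rightarrow> ('e \<Rightarrow> 'v) \<Rightarrow> bool" where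
  "cdigraph V Ed s r \<longleftrightarrow> countable V \<and> countable Ed \<and> (\<forall>e\<in>Ed. s e \<in> V \<and> r e \<in> V)"

text \<open>E^n v: paths e_1 ... e_n of length n (r e_i = s e_(i+1)) ending at v (r e_n = v);
  for n = 0 the only path is the vertex v itself (represented by the empty list).\<close>
definition paths_to :: "'e set \<Rightarrow> ('e \<Rightarrow> 'v) \<Rightarrow> ('e \<Rightarrow> 'v) \<Rightarrow> nat \<Rightarrow> 'v \<Rightarrow> 'e list set" where
  "paths_to Ed s r n v = {p. length p = n \<and> set p \<subseteq> Ed \<and>
      (\<forall>i. Suc i < n \<longrightarrow> r (p ! i) = s (p ! Suc i)) \<and> (n > 0 \<longrightarrow> r (last p) = v)}"

definition ecard :: "'a set \<Rightarrow> ennreal" where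
  "ecard A = (if finite A then of_nat (card A) else \<infinity>)"

definition Zfun :: "'e set \<Rightarrow> ('e \<Rightarrow> 'v) \<Rightarrow> ('e \<Rightarrow> 'v) \<Rightarrow> 'v \<Rightarrow> real \<Rightarrow> ennreal" where
  "Zfun Ed s r v \<beta> = (\<Sum>n. ecard (paths_to Ed s r n v) * ennreal (exp (- \<beta> * real n)))"

definition beta_reg :: "'v set \<Rightarrow> 'e set \<Rightarrow> ('e \<Rightarrow> 'v) \<Rightarrow> ('e \<Rightarrow> 'v) \<Rightarrow> real \<Rightarrow> 'v set" where
  "beta_reg V Ed s r \<beta> = {v\<in>V. Zfun Ed s r v \<beta> < \<infinity>}"

text \<open>Critical inverse temperature, as an extended real (inf of the empty set is +\<infinity>,
  an unbounded-below set gives -\<infinity>).\<close>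
definition crit_beta :: "'e set \<Rightarrow> ('e \<Rightarrow> 'v) \<Rightarrow> ('e \<Rightarrow> 'v) \<Rightarrow> 'v \<Rightarrow> ereal" where
  "crit_beta Ed s r v = Inf (ereal ` {\<beta>. Zfun Ed s r v \<beta> < \<infinity>})"

end

theory Submission
  imports Defs
begin

lemma paths_Suc:
  "paths_to Ed s r (Suc n) v =
     (\<lambda>(e,q). q @ [e]) ` (SIGMA e:{e\<in>Ed. r e = v}. paths_to Ed s r n (s e))"
proof (rule set_eqI, rule iffI)
  fix p assume p: "p \<in> paths_to Ed s r (Suc n) v"
  hence lp: "length p = Suc n" and sp: "set p \<subseteq> Ed"
    and ad: "\<And>i. Suc i < Suc n \<Longrightarrow> r (p ! i) = s (p ! Suc i)" and rl: "r (last p) = v"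
    by (auto simp: paths_to_def)
  define q where "q = butlast p"
  define e where "e = last p"
  have pe: "p = q @ [e]" using lp unfolding q_def e_def
    by (metis append_butlast_last_id list.size(3) nat.distinct(1))
  have lq: "length q = n" using lp pe by simp
  have "e \<in> Ed" using sp pe by auto
  moreover have "q \<in> paths_to Ed s r n (s e)"
    unfolding paths_to_def
  proof (intro CollectI conjI allI impI)
    show "length q = n" by fact
    show "set q \<subseteq> Ed" using sp pe by auto
    fix i assume "Suc i < n" thus "r (q ! i) = s (q ! Suc i)"
      using ad[of i] pe lq by (simp add: nth_append)
  next
    assume "n > 0"
    then have "r (p ! (n-1)) = s (p ! n)" using ad[of "n-1"] by simp
    moreover have "p ! (n-1) = last q" using \<open>n>0\<close> pe lq
    proof -
      have "q \<noteq> []" using \<open>n>0\<close> lq by auto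
      hence "last q = q ! (length q - 1)" by (rule last_conv_nth)
      thus ?thesis using pe lq \<open>n>0\<close> by (simp add: nth_append)
    qed
    moreover have "p ! n = e" using pe lq by (simp add: nth_append)
    ultimately show "r (last q) = s e" by simp
  qed
  ultimately have mem: "(e, q) \<in> (SIGMA e:{e \<in> Ed. r e = v}. paths_to Ed s r n (s e))"
    using rl e_def by blast
  show "p \<in> (\<lambda>(e,q). q @ [e]) ` (SIGMA e:{e\<in>Ed. r e = v}. paths_to Ed s r n (s e))"
    by (rule image_eqI[OF _ mem]) (simp add: pe)
next
  fix p assume "p \<in> (\<lambda>(e,q). q @ [e]) ` (SIGMA e:{e\<in>Ed. r e = v}. paths_to Ed s r n (s e))"
  then obtain e q where pe: "p = q @ [e]" and e: "e \<in> Ed" "r e = v"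
    and q: "q \<in> paths_to Ed s r n (s e)"
  proof -
    from \<open>p \<in> _\<close> obtain x where x: "x \<in> (SIGMA e:{e\<in>Ed. r e = v}. paths_to Ed s r n (s e))"
      and px: "p = (\<lambda>(e,q). q @ [e]) x" by (rule imageE)
    obtain e q where xe: "x = (e,q)" by (cases x)
    have h: "e \<in> Ed" "r e = v" "q \<in> paths_to Ed s r n (s e)" using x unfolding xe by simp_all
    show thesis by (rule that[OF _ h]) (simp add: px xe)
  qed
  from q have lq: "length q = n" and sq: "set q \<subseteq> Ed"
    and ad: "\<And>i. Suc i < n \<Longrightarrow> r (q ! i) = s (q ! Suc i)" and rl: "n > 0 \<Longrightarrow> r (last q) = s e"
    by (auto simp: paths_to_def)
  show "p \<in> paths_to Ed s r (Suc n) v"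
    unfolding paths_to_def
  proof (intro CollectI conjI allI impI)
    show "length p = Suc n" using pe lq by simp
    show "set p \<subseteq> Ed" using pe sq e by auto
    show "r (last p) = v" using pe e by simp
    fix i assume i: "Suc i < Suc n"
    show "r (p ! i) = s (p ! Suc i)"
    proof (cases "Suc i < n")
      case True thus ?thesis using ad[of i] pe lq by (simp add: nth_append)
    next
      case False
      hence "i = n - 1" "n > 0" using i by auto
      moreover have "q \<noteq> []" using \<open>n>0\<close> lq by auto
      moreover hence "last q = q ! (length q - 1)" by (rule last_conv_nth)
      ultimately show ?thesis using rl pe lq by (simp add: nth_append)
    qed
  qed
qed

lemma paths_0: "paths_to Ed s r 0 v = {[]}"
  by (auto simp: paths_to_def)


fun P :: "real \<Rightarrow> nat \<Rightarrow> nat" where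
  "P c 0 = 1"
| "P c (Suc n) = nat \<lceil>exp (c * real (Suc n)) / real (P c n)\<rceil> * P c n"

definition mm :: "real \<Rightarrow> nat \<Rightarrow> nat" where
  "mm c n = nat \<lceil>exp (c * real (Suc n)) / real (P c n)\<rceil>"

lemma P_Suc': "P c (Suc n) = mm c n * P c n"
  by (simp add: mm_def)

declare P.simps(2)[simp del]

fun cnt :: "real \<Rightarrow> nat \<Rightarrow> nat \<Rightarrow> nat" where
  "cnt c k 0 = 1"
| "cnt c k (Suc n) = mm c k * cnt c (Suc k) n"

lemma P_add: "P c (k + n) = P c k * cnt c k n"
proof (induction n arbitrary: k)
  case 0 then show ?case by simp
next
  case (Suc n)
  have "P c (k + Suc n) = P c (Suc k + n)" by simp
  also have "\<dots> = P c (Suc k) * cnt c (Suc k) n" by (rule Suc.IH)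
  also have "\<dots> = P c k * cnt c k (Suc n)" by (simp add: P_Suc')
  finally show ?case .
qed

definition KK :: "real \<Rightarrow> real" where "KK c = 1 / (1 - exp (- c))"

lemma KK_pos: "c > 0 \<Longrightarrow> KK c > 0"
  unfolding KK_def by simp

lemma P_bounds:
  assumes c: "c > 0"
  shows "exp (c * real n) \<le> real (P c n) \<and> real (P c n) \<le> KK c * exp (c * real n)"
proof (induction n)
  case 0 then show ?case using c by (simp add: KK_def field_simps)
next
  case (Suc n)
  define x where "x = exp (c * real (Suc n))"
  define p where "p = real (P c n)"
  have p0: "p > 0" using Suc unfolding p_def by (meson exp_gt_zero less_le_trans)
  have x0: "x > 0" unfolding x_def by simp
  have ce: "real (nat \<lceil>x / p\<rceil>) = of_int \<lceil>x / p\<rceil>"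
    using x0 p0 by (simp add: divide_pos_pos order.strict_implies_order)
  have PS: "real (P c (Suc n)) = of_int \<lceil>x / p\<rceil> * p"
    using ce by (simp add: P.simps(2) x_def p_def)
  have lo: "x \<le> of_int \<lceil>x / p\<rceil> * p"
    using p0 by (metis le_of_int_ceiling pos_divide_le_eq)
  have "of_int \<lceil>x / p\<rceil> * p \<le> (x / p + 1) * p"
    using p0 by (intro mult_right_mono) (auto simp: less_imp_le)
  also have "\<dots> = x + p" using p0 by (simp add: field_simps)
  also have "\<dots> \<le> x + KK c * exp (c * real n)" using Suc p_def by simp
  also have "\<dots> = KK c * x"
  proof -
    have e1: "exp (- c) < 1" using c by simp
    have "x * exp (- c) = exp (c * real (Suc n) + - c)" unfolding x_def
      by (rule exp_add[symmetric])
    also have "\<dots> = exp (c * real n)" by (simp add: algebra_simps)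
    finally have "x * exp (- c) = exp (c * real n)" .
    then show ?thesis using e1 unfolding KK_def by (simp add: field_simps)
  qed
  finally show ?case using lo PS x_def by simp
qed

lemma cnt_bounds:
  assumes c: "c > 0"
  shows "exp (c * real n) / KK c \<le> real (cnt c k n) \<and> real (cnt c k n) \<le> KK c * exp (c * real n)"
proof -
  have eq: "real (cnt c k n) = real (P c (k + n)) / real (P c k)"
  proof -
    have "real (P c k) > 0" using P_bounds[OF c, of k] by (meson exp_gt_zero less_le_trans)
    then show ?thesis by (simp add: P_add)
  qed
  have ek: "exp (c * real (k + n)) = exp (c * real k) * exp (c * real n)"
    by (simp add: mult_exp_exp[symmetric] algebra_simps)
  note b1 = P_bounds[OF c, of "k+n"] and b2 = P_bounds[OF c, of k]
  have K: "KK c > 0" using KK_pos[OF c] .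
  have pk: "real (P c k) > 0" using b2 by (meson exp_gt_zero less_le_trans)
  have "exp (c * real n) / KK c \<le> real (P c (k + n)) / real (P c k)"
  proof -
    have "exp (c * real n) * real (P c k) \<le> exp (c * real n) * (KK c * exp (c * real k))"
      using b2 by (intro mult_left_mono) auto
    also have "\<dots> = KK c * exp (c * real (k+n))" using ek by simp
    also have "\<dots> \<le> KK c * real (P c (k + n))" using b1 K by (intro mult_left_mono) auto
    finally show ?thesis using K pk by (simp add: field_simps)
  qed
  moreover have "real (P c (k + n)) / real (P c k) \<le> KK c * exp (c * real n)"
  proof -
    have "real (P c (k + n)) \<le> KK c * exp (c * real (k+n))" using b1 by simp
    also have "\<dots> = KK c * exp (c * real n) * exp (c * real k)" using ek by simp
    also have "\<dots> \<le> KK c * exp (c * real n) * real (P c k)"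
      using b2 K by (intro mult_left_mono) auto
    finally show ?thesis using pk by (simp add: field_simps)
  qed
  ultimately show ?thesis using eq by simp
qed

lemma Z_iff:
  fixes a :: "nat \<Rightarrow> nat"
  assumes L: "L > 0" and lo: "\<And>n. L * exp (c * real n) \<le> real (a n)"
    and up: "\<And>n. real (a n) \<le> U * exp (c * real n)"
  shows "(\<Sum>n. (of_nat (a n) :: ennreal) * ennreal (exp (- \<beta> * real n))) < \<infinity> \<longleftrightarrow> c < \<beta>"
proof -
  define f where "f n = real (a n) * exp (- \<beta> * real n)" for n
  have f0: "\<And>n. 0 \<le> f n" unfolding f_def by simp
  have teq: "(of_nat (a n) :: ennreal) * ennreal (exp (- \<beta> * real n)) = ennreal (f n)" for n
    unfolding f_def by (simp add: ennreal_of_nat_eq_real_of_nat ennreal_mult'')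
  have "(\<Sum>n. (of_nat (a n) :: ennreal) * ennreal (exp (- \<beta> * real n))) < \<infinity> \<longleftrightarrow> summable f"
    unfolding teq using summable_suminf_not_top[OF f0] ennreal_suminf_neq_top[OF _ f0]
    by (auto simp: top.not_eq_extremum)
  also have "summable f \<longleftrightarrow> c < \<beta>"
  proof
    assume sf: "summable f"
    show "c < \<beta>"
    proof (rule ccontr)
      assume "\<not> c < \<beta>"
      hence cb: "\<beta> \<le> c" by simp
      have "f n \<ge> L" for n
      proof -
        have "L \<le> L * exp ((c - \<beta>) * real n)" using L cb by simp
        also have "\<dots> = L * exp (c * real n) * exp (- \<beta> * real n)"
          by (simp add: exp_add[symmetric] algebra_simps)
        also have "\<dots> \<le> f n" unfolding f_def using lo[of n] by (intro mult_right_mono) auto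
        finally show ?thesis .
      qed
      moreover have "f \<longlonglongrightarrow> 0" using summable_LIMSEQ_zero[OF sf] .
      then have "eventually (\<lambda>n. f n < L) sequentially"
        using L by (auto dest: order_tendstoD(2))
      ultimately show False by (metis eventually_sequentially le_refl not_le)
    qed
  next
    assume cb: "c < \<beta>"
    have g: "summable (\<lambda>n. U * exp (c - \<beta>) ^ n)"
      using cb by (intro summable_mult summable_geometric) simp
    show "summable f"
    proof (rule summable_comparison_test[OF _ g], intro exI allI impI)
      fix n :: nat
      have "norm (f n) = f n" using f0 by simp
      also have "\<dots> \<le> U * exp (c * real n) * exp (- \<beta> * real n)"
        unfolding f_def using up[of n] by (intro mult_right_mono) auto
      also have "\<dots> = U * exp (c - \<beta>) ^ n"
      proof -
        have "exp (c * real n) * exp (- \<beta> * real n) = exp (c * real n + - \<beta> * real n)"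
          by (rule exp_add[symmetric])
        also have "\<dots> = exp (real n * (c - \<beta>))" by (simp add: algebra_simps)
        also have "\<dots> = exp (c - \<beta>) ^ n" by (rule exp_of_nat_mult)
        finally show ?thesis by simp
      qed
      finally show "norm (f n) \<le> U * exp (c - \<beta>) ^ n" .
    qed
  qed
  finally show ?thesis .
qed


definition src :: "nat \<Rightarrow> nat" where
  "src e = prod_encode (fst (prod_decode e), Suc (fst (prod_decode (snd (prod_decode e)))))"
definition rng :: "nat \<Rightarrow> nat" where
  "rng e = prod_encode (fst (prod_decode e), fst (prod_decode (snd (prod_decode e))))"
definition Edg :: "(nat \<Rightarrow> real) \<Rightarrow> nat set" where
  "Edg cc = {prod_encode (i, prod_encode (k, j)) | i k j. j < mm (cc i) k}"

lemma in_edges: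
  "{e \<in> Edg cc. rng e = prod_encode (i, k)} =
     (\<lambda>j. prod_encode (i, prod_encode (k, j))) ` {..<mm (cc i) k}"
proof (rule set_eqI, rule iffI)
  fix e assume "e \<in> {e \<in> Edg cc. rng e = prod_encode (i, k)}"
  then obtain i' k' j where e: "e = prod_encode (i', prod_encode (k', j))" "j < mm (cc i') k'"
    and r: "rng e = prod_encode (i, k)" unfolding Edg_def by blast
  from r e have "i' = i" "k' = k" by (simp_all add: rng_def prod_encode_eq)
  with e show "e \<in> (\<lambda>j. prod_encode (i, prod_encode (k, j))) ` {..<mm (cc i) k}" by auto
next
  fix e assume "e \<in> (\<lambda>j. prod_encode (i, prod_encode (k, j))) ` {..<mm (cc i) k}"
  then obtain j where "e = prod_encode (i, prod_encode (k, j))" "j < mm (cc i) k" by auto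
  then show "e \<in> {e \<in> Edg cc. rng e = prod_encode (i, k)}" unfolding Edg_def rng_def by auto
qed

lemma src_in: "e \<in> {e \<in> Edg cc. rng e = prod_encode (i, k)} \<Longrightarrow> src e = prod_encode (i, Suc k)"
  unfolding in_edges by (auto simp: src_def)

lemma count_paths:
  "finite (paths_to (Edg cc) src rng n (prod_encode (i, k))) \<and>
   card (paths_to (Edg cc) src rng n (prod_encode (i, k))) = cnt (cc i) k n"
proof (induction n arbitrary: k)
  case 0 then show ?case by (simp add: paths_0)
next
  case (Suc n)
  let ?A = "{e \<in> Edg cc. rng e = prod_encode (i, k)}"
  let ?Q = "paths_to (Edg cc) src rng n (prod_encode (i, Suc k))"
  have sig: "(SIGMA e:?A. paths_to (Edg cc) src rng n (src e)) = ?A \<times> ?Q"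
    using src_in by (auto simp: Sigma_def)
  have eq: "paths_to (Edg cc) src rng (Suc n) (prod_encode (i, k)) = (\<lambda>(e,q). q @ [e]) ` (?A \<times> ?Q)"
    by (simp only: paths_Suc sig)
  have inj: "inj_on (\<lambda>(e,q). q @ [e]) (?A \<times> ?Q)"
    by (rule inj_onI) auto
  have cA: "card ?A = mm (cc i) k" "finite ?A"
    unfolding in_edges by (auto simp: card_image inj_on_def prod_encode_eq)
  have IH: "finite ?Q" "card ?Q = cnt (cc i) (Suc k) n" using Suc.IH[of "Suc k"] by auto
  show ?case unfolding eq using inj cA IH
    by (simp add: card_image card_cartesian_product)
qed

lemma ecard_paths:
  "ecard (paths_to (Edg cc) src rng n (prod_encode (i, k))) = of_nat (cnt (cc i) k n)"
  using count_paths[of cc n i k] by (simp add: ecard_def)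

lemma Z_vertex:
  assumes c: "cc i > 0"
  shows "Zfun (Edg cc) src rng (prod_encode (i, k)) \<beta> < \<infinity> \<longleftrightarrow> cc i < \<beta>"
  unfolding Zfun_def ecard_paths
proof (rule Z_iff)
  show "1 / KK (cc i) > 0" using KK_pos[OF c] by simp
  fix n
  show "1 / KK (cc i) * exp (cc i * real n) \<le> real (cnt (cc i) k n)"
    using cnt_bounds[OF c, of n k] by simp
  show "real (cnt (cc i) k n) \<le> KK (cc i) * exp (cc i * real n)"
    using cnt_bounds[OF c, of n k] by simp
qed

theorem proposition6p12:
  fixes C :: "real set"
  assumes "countable C" and "infinite C" and "C \<subseteq> {0<..}"
  shows "\<exists>(V::nat set) (Ed::nat set) (s::nat \<Rightarrow> nat) (r::nat \<Rightarrow> nat).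
           cdigraph V Ed s r \<and>
           crit_beta Ed s r ` (\<Union>\<beta>\<in>{0<..}. beta_reg V Ed s r \<beta>) = ereal ` C"
proof -
  define cc where "cc = from_nat_into C"
  have Cne: "C \<noteq> {}" using assms(2) by auto
  have ccC: "cc i \<in> C" for i unfolding cc_def using from_nat_into[OF Cne] .
  have ccpos: "cc i > 0" for i using ccC assms(3) by auto
  have dec: "x = prod_encode (fst (prod_decode x), snd (prod_decode x))" for x
    by simp
  have Zv: "Zfun (Edg cc) src rng x \<beta> < \<infinity> \<longleftrightarrow> cc (fst (prod_decode x)) < \<beta>" for x \<beta>
    using Z_vertex[of cc "fst (prod_decode x)" "snd (prod_decode x)" \<beta>, OF ccpos] by (simp only: prod.collapse prod_decode_inverse)
  have U: "(\<Union>\<beta>\<in>{0<..}. beta_reg UNIV (Edg cc) src rng \<beta>) = UNIV"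
  proof (rule set_eqI, rule iffI)
    fix x :: nat
    have "x \<in> beta_reg UNIV (Edg cc) src rng (cc (fst (prod_decode x)) + 1)"
      unfolding beta_reg_def using Zv by simp
    moreover have "cc (fst (prod_decode x)) + 1 > 0" using ccpos[of "fst (prod_decode x)"] by simp
    ultimately show "x \<in> (\<Union>\<beta>\<in>{0<..}. beta_reg UNIV (Edg cc) src rng \<beta>)" by auto
  qed simp
  have crit: "crit_beta (Edg cc) src rng x = ereal (cc (fst (prod_decode x)))" for x
  proof -
    have "{\<beta>. Zfun (Edg cc) src rng x \<beta> < \<infinity>} = {cc (fst (prod_decode x))<..}"
      using Zv by auto
    moreover have "Inf (ereal ` {a<..}) = ereal a" for a :: real
    proof -
      have "{a<..} \<noteq> {}" using gt_ex[of a] by blast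
      from ereal_Inf'[OF bdd_below_Ioi this] show ?thesis unfolding cInf_greaterThan by (rule sym)
    qed
    ultimately show ?thesis unfolding crit_beta_def by (simp only:)
  qed
  have img: "crit_beta (Edg cc) src rng ` UNIV = ereal ` C"
  proof (rule set_eqI, rule iffI)
    fix y assume "y \<in> crit_beta (Edg cc) src rng ` UNIV"
    then show "y \<in> ereal ` C" using crit ccC by auto
  next
    fix y assume "y \<in> ereal ` C"
    then obtain c where c: "c \<in> C" "y = ereal c" by auto
    obtain i where "cc i = c" using from_nat_into_surj[OF assms(1) c(1)] cc_def by auto
    then have "crit_beta (Edg cc) src rng (prod_encode (i, 0)) = y" using crit c by simp
    then show "y \<in> crit_beta (Edg cc) src rng ` UNIV" by (rule image_eqI[OF sym UNIV_I])
  qed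
  have G: "cdigraph UNIV (Edg cc) src rng" unfolding cdigraph_def
    by (intro conjI ballI countableI_type UNIV_I)
  show ?thesis
    apply (rule exI[of _ UNIV], rule exI[of _ "Edg cc"], rule exI[of _ src], rule exI[of _ rng])
    apply (rule conjI[OF G])
    apply (subst U)
    apply (rule img)
    done
qed

end
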